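(* Let $\{q_k:k\ge0\}$ be a non-decreasing sequence of nonnegative numbers with $q_0>0$ satisfying $\frac{q_{n-1}}{Q_n}=O(1/n)$ as $n\to\infty$. Then there is a constant $c>0$ such that for all $n\in\mathbb N_+$ and all $x\in G_m$, $$|F_n(x)|\le \frac{c}{n}\sum_{j=0}^{|n|}M_j\,|K_{M_j}(x)|.$$
   Context: Let $m=(m_0,m_1,\dots)$ be a bounded sequence of integers $m_k\ge 2$; $G_m=\prod_k Z_{m_k}$ with Haar probability measure $\mu$; $M_0=1$, $M_{k+1}=m_kM_k$, $n=\sum_j n_jM_j$ with $n_j\in Z_{m_j}$. $r_k(x)=\exp(2\pi i x_k/m_k)$, $\psi_n=\prod_k r_k^{n_k}$, $D_n=\sum_{k=0}^{n-1}\psi_k$. The Fejér kernel is $K_n=\frac1n\sum_{k=1}^nD_k$. $Q_n=\sum_{k=0}^{n-1}q_k$ and the Nörlund kernel is $F_n=\frac1{Q_n}\sum_{k=1}^nq_{n-k}D_k$. For $n\in\mathbb N_+$, $|n|$ denotes the unique integer with $M_{|n|}\le n<M_{|n|+1}$. *)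

theory Defs
  imports Complex_Main "HOL-Library.Landau_Symbols"
begin

definition Gm :: "(nat \<Rightarrow> nat) \<Rightarrow> (nat \<Rightarrow> nat) set" where
  "Gm m = {x. \<forall>k. x k < m k}"

definition Mseq :: "(nat \<Rightarrow> nat) \<Rightarrow> nat \<Rightarrow> nat" where
  "Mseq m k = (\<Prod>i<k. m i)"

definition digit :: "(nat \<Rightarrow> nat) \<Rightarrow> nat \<Rightarrow> nat \<Rightarrow> nat" where
  "digit m n j = (n div Mseq m j) mod m j"

definition rfun :: "(nat \<Rightarrow> nat) \<Rightarrow> nat \<Rightarrow> (nat \<Rightarrow> nat) \<Rightarrow> complex" where
  "rfun m k x = exp (2 * pi * \<i> * of_nat (x k) / of_nat (m k))"

text \<open>Vilenkin function psi_n = prod_k r_k^(n_k); digits n_k vanish for k > n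
  since M_k >= 2^k > k, so the product over k <= n is the full product.\<close>
definition psi :: "(nat \<Rightarrow> nat) \<Rightarrow> nat \<Rightarrow> (nat \<Rightarrow> nat) \<Rightarrow> complex" where
  "psi m n x = (\<Prod>k\<le>n. rfun m k x ^ digit m n k)"

definition Dir :: "(nat \<Rightarrow> nat) \<Rightarrow> nat \<Rightarrow> (nat \<Rightarrow> nat) \<Rightarrow> complex" where
  "Dir m n x = (\<Sum>k<n. psi m k x)"

definition Fejer :: "(nat \<Rightarrow> nat) \<Rightarrow> nat \<Rightarrow> (nat \<Rightarrow> nat) \<Rightarrow> complex" where
  "Fejer m n x = (1 / of_nat n) * (\<Sum>k=1..n. Dir m k x)"

definition Qsum :: "(nat \<Rightarrow> real) \<Rightarrow> nat \<Rightarrow> real" where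
  "Qsum q n = (\<Sum>k<n. q k)"

definition Norlund :: "(nat \<Rightarrow> nat) \<Rightarrow> (nat \<Rightarrow> real) \<Rightarrow> nat \<Rightarrow> (nat \<Rightarrow> nat) \<Rightarrow> complex" where
  "Norlund m q n x = (1 / of_real (Qsum q n)) * (\<Sum>k=1..n. of_real (q (n - k)) * Dir m k x)"

definition nlev :: "(nat \<Rightarrow> nat) \<Rightarrow> nat \<Rightarrow> nat" where
  "nlev m n = (THE s. Mseq m s \<le> n \<and> n < Mseq m (Suc s))"

end

theory Submission
  imports Defs "HOL-Analysis.Analysis"
begin

lemma Mseq_0[simp]: "Mseq m 0 = 1" by (simp add: Mseq_def)
lemma Mseq_Suc: "Mseq m (Suc k) = m k * Mseq m k" by (simp add: Mseq_def)

definition Ssum :: "(nat \<Rightarrow> nat) \<Rightarrow> nat \<Rightarrow> (nat \<Rightarrow> nat) \<Rightarrow> complex" where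
  "Ssum mm n x = (\<Sum>k=1..n. Dir mm k x)"

lemma telesc: fixes w :: "nat \<Rightarrow> real" shows "(\<Sum>k=1..n. w k - w (Suc k)) = w 1 - w (Suc n)"
  by (induct n) auto

context fixes m :: "nat \<Rightarrow> nat" assumes m2: "\<And>k. m k \<ge> 2"
begin

lemma Mpos: "Mseq m k > 0"
proof (induct k)
  case (Suc k) thus ?case using m2[of k] by (simp add: Mseq_Suc)
qed simp

lemma Mge: "2^k \<le> Mseq m k"
proof (induct k)
  case (Suc k) thus ?case using m2[of k] by (simp add: Mseq_Suc mult_mono)
qed simp

lemma Mgt: "k < Mseq m k"
  using Mge[of k] less_exp[of k] by linarith

lemma Mmono_strict: "k < s \<Longrightarrow> Mseq m k < Mseq m s"
proof (induct s)
  case (Suc s)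
  have "Mseq m s < Mseq m (Suc s)" using m2[of s] Mpos[of s] by (simp add: Mseq_Suc)
  thus ?case using Suc by (cases "k = s") auto
qed simp

lemma Mmono: "k \<le> s \<Longrightarrow> Mseq m k \<le> Mseq m s"
  using Mmono_strict by (cases "k = s") (auto intro: less_imp_le)

lemma Mdvd: "k \<le> s \<Longrightarrow> Mseq m k dvd Mseq m s"
proof (induct s)
  case (Suc s) thus ?case by (cases "k = Suc s") (auto simp: Mseq_Suc)
qed simp

lemma digit_big: "n < Mseq m k \<Longrightarrow> digit m n k = 0"
  by (simp add: digit_def)

lemma psi_N: assumes "n < Mseq m N"
  shows "psi m n x = (\<Prod>k<N. rfun m k x ^ digit m n k)"
proof -
  let ?g = "\<lambda>k. rfun m k x ^ digit m n k"
  define L where "L = max N (Suc n)"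
  have "prod ?g {..n} = prod ?g {..<L}"
  proof (rule prod.mono_neutral_left)
    show "\<forall>i\<in>{..<L} - {..n}. ?g i = 1"
    proof
      fix i assume "i \<in> {..<L} - {..n}"
      hence "n < i" by auto
      hence "n < Mseq m i" using Mgt[of i] by linarith
      thus "?g i = 1" by (simp add: digit_big)
    qed
  qed (auto simp: L_def)
  also have "\<dots> = prod ?g {..<N}"
  proof (rule prod.mono_neutral_right)
    show "\<forall>i\<in>{..<L} - {..<N}. ?g i = 1"
    proof
      fix i assume "i \<in> {..<L} - {..<N}"
      hence "N \<le> i" by auto
      hence "n < Mseq m i" using Mmono[of N i] assms by linarith
      thus "?g i = 1" by (simp add: digit_big)
    qed
  qed (auto simp: L_def)
  finally show ?thesis by (simp add: psi_def)
qed

lemma digit_comb: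
  assumes i: "i < Mseq m s" and a: "a < m s" and k: "k < s"
  shows "digit m (a * Mseq m s + i) k = digit m i k"
proof -
  obtain P where P: "Mseq m s = Mseq m (Suc k) * P" using Mdvd[of "Suc k" s] k by auto
  have e: "a * Mseq m s + i = i + Mseq m k * (a * m k * P)"
    using P by (simp add: Mseq_Suc algebra_simps)
  have "(a * Mseq m s + i) div Mseq m k = i div Mseq m k + a * m k * P"
    unfolding e using Mpos[of k] by (simp only: div_mult_self2 [of "Mseq m k"] not_gr0)
  hence "digit m (a * Mseq m s + i) k = (i div Mseq m k + m k * (a * P)) mod m k"
    by (simp add: digit_def ac_simps)
  also have "\<dots> = (i div Mseq m k) mod m k" by (rule mod_mult_self2)
  finally show ?thesis by (simp add: digit_def)
qed

lemma digit_top: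
  assumes i: "i < Mseq m s" and a: "a < m s"
  shows "digit m (a * Mseq m s + i) s = a"
proof -
  have "(a * Mseq m s + i) div Mseq m s = a" using i Mpos[of s] by simp
  thus ?thesis using a by (simp add: digit_def)
qed

lemma psi_comb:
  assumes i: "i < Mseq m s" and a: "a < m s"
  shows "psi m (a * Mseq m s + i) x = rfun m s x ^ a * psi m i x"
proof -
  have "a * Mseq m s + i < Mseq m (Suc s)"
  proof -
    have "a * Mseq m s + i < (a+1) * Mseq m s" using i by simp
    also have "\<dots> \<le> m s * Mseq m s" using a by (intro mult_right_mono) auto
    finally show ?thesis by (simp add: Mseq_Suc)
  qed
  hence "psi m (a * Mseq m s + i) x = (\<Prod>k<Suc s. rfun m k x ^ digit m (a * Mseq m s + i) k)"
    by (rule psi_N)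
  also have "\<dots> = (\<Prod>k<s. rfun m k x ^ digit m i k) * rfun m s x ^ a"
    using digit_comb[OF i a] digit_top[OF i a] by simp
  also have "(\<Prod>k<s. rfun m k x ^ digit m i k) = psi m i x"
    using psi_N[OF i] by simp
  finally show ?thesis by simp
qed


lemma norm_rfun: "norm (rfun m k x) = 1"
  by (simp add: rfun_def)

lemma norm_psi: "norm (psi m n x) = 1"
  by (simp add: psi_def prod_norm[symmetric] norm_power norm_rfun)

lemma norm_Dir: "norm (Dir m n x) \<le> n"
proof -
  have "norm (Dir m n x) \<le> (\<Sum>k<n. norm (psi m k x))" unfolding Dir_def by (rule norm_sum)
  thus ?thesis by (simp add: norm_psi)
qed

lemma Dir_comb:
  assumes a: "a < m s" and k: "k \<le> Mseq m s"
  shows "Dir m (a * Mseq m s + k) x = Dir m (a * Mseq m s) x + rfun m s x ^ a * Dir m k x"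
  using k
proof (induct k)
  case (Suc k)
  have "Dir m (a * Mseq m s + Suc k) x = Dir m (a * Mseq m s + k) x + psi m (a * Mseq m s + k) x"
    by (simp add: Dir_def)
  also have "psi m (a * Mseq m s + k) x = rfun m s x ^ a * psi m k x"
    using Suc.prems a by (intro psi_comb) auto
  finally show ?case using Suc by (simp add: Dir_def algebra_simps)
qed (simp add: Dir_def)

lemma Dir_mult:
  assumes "a \<le> m s"
  shows "Dir m (a * Mseq m s) x = Dir m (Mseq m s) x * (\<Sum>t<a. rfun m s x ^ t)"
  using assms
proof (induct a)
  case (Suc a)
  have "Dir m (Suc a * Mseq m s) x = Dir m (a * Mseq m s + Mseq m s) x" by (simp add: add.commute)
  also have "\<dots> = Dir m (a * Mseq m s) x + rfun m s x ^ a * Dir m (Mseq m s) x"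
    using Suc.prems by (intro Dir_comb) auto
  finally show ?case using Suc by (simp add: algebra_simps)
qed (simp add: Dir_def)

lemma geo:
  assumes x: "x \<in> Gm m"
  shows "(\<Sum>t<m s. rfun m s x ^ t) = (if x s = 0 then of_nat (m s) else 0)"
proof (cases "x s = 0")
  case True thus ?thesis by (simp add: rfun_def)
next
  case False
  have xs: "x s < m s" using x by (simp add: Gm_def)
  have ms: "m s > 0" using m2[of s] by simp
  have "rfun m s x ^ m s = exp (of_nat (m s) * (2 * pi * \<i> * of_nat (x s) / of_nat (m s)))"
    unfolding rfun_def by (rule exp_of_nat_mult[symmetric])
  also have "\<dots> = exp (of_nat (x s) * (2 * pi * \<i>))"
    using ms by (simp add: field_simps)
  also have "\<dots> = exp (2 * pi * \<i>) ^ x s" by (rule exp_of_nat_mult)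
  also have "\<dots> = 1" by simp
  finally have p: "rfun m s x ^ m s = 1" .
  have ne: "rfun m s x \<noteq> 1"
  proof
    assume "rfun m s x = 1"
    then obtain n :: int where n: "2 * pi * real (x s) / real (m s) = of_int (2 * n) * pi"
      unfolding rfun_def exp_eq_1 by auto
    hence "2 * (pi * (real (x s) / real (m s))) = 2 * (pi * of_int n)" by (simp add: field_simps)
    hence "real (x s) / real (m s) = of_int n" using pi_gt_zero ms by (auto simp: field_simps)
    moreover have "0 < real (x s) / real (m s)" "real (x s) / real (m s) < 1"
      using False xs ms by auto
    ultimately show False by (metis of_int_0_less_iff of_int_less_1_iff not_less zero_less_one_class.zero_le_one int_one_le_iff_zero_less linorder_not_le)
  qed
  show ?thesis using False p ne by (simp add: sum_gp_strict)
qed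

lemma Dir_M_nz: assumes x: "x \<in> Gm m"
  shows "Dir m (Mseq m s) x \<noteq> 0 \<Longrightarrow> \<forall>j<s. x j = 0"
proof (induct s)
  case (Suc s)
  have "Dir m (Mseq m (Suc s)) x = Dir m (Mseq m s) x * (\<Sum>t<m s. rfun m s x ^ t)"
    by (simp add: Mseq_Suc Dir_mult)
  with Suc.prems have "Dir m (Mseq m s) x \<noteq> 0" "x s = 0" using geo[OF x, of s] by (auto split: if_splits)
  thus ?case using Suc.hyps less_Suc_eq by auto
qed simp

lemma psi_one: assumes "\<forall>j<s. x j = 0" "i < Mseq m s"
  shows "psi m i x = 1"
  using psi_N[OF assms(2)] assms(1) by (simp add: rfun_def)


lemma Ssum_Suc: "Ssum m (Suc n) x = Ssum m n x + Dir m (Suc n) x"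
  by (simp add: Ssum_def)
lemma Ssum_0[simp]: "Ssum m 0 x = 0" by (simp add: Ssum_def)

lemma Ssum_M: assumes x: "x \<in> Gm m"
  shows "real (Mseq m s) * norm (Dir m (Mseq m s) x) \<le> 2 * norm (Ssum m (Mseq m s) x)"
proof (cases "Dir m (Mseq m s) x = 0")
  case False
  hence z: "\<forall>j<s. x j = 0" by (rule Dir_M_nz[OF x])
  have D: "Dir m k x = of_nat k" if "k \<le> Mseq m s" for k
  proof -
    have "Dir m k x = (\<Sum>i<k. 1)" unfolding Dir_def using that psi_one[OF z]
      by (intro sum.cong) auto
    thus ?thesis by simp
  qed
  have S: "Ssum m k x = of_nat (\<Sum>i=1..k. i)" if "k \<le> Mseq m s" for k
    using that by (induct k) (auto simp: Ssum_Suc D)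
  have g: "2 * (\<Sum>i=1..k. i) = k * (k + 1)" for k :: nat by (induct k) auto
  let ?M = "Mseq m s"
  have "real ?M * norm (Dir m ?M x) = real ?M * real ?M" using D[of ?M] by simp
  also have "\<dots> \<le> real (?M * (?M + 1))" by simp
  also have "\<dots> = 2 * norm (Ssum m ?M x)" using S[of ?M] g[of ?M]
    by (simp only: norm_of_nat)
  finally show ?thesis .
qed simp


lemma Ssum_comb:
  assumes a: "a < m s" and b: "b \<le> Mseq m s"
  shows "Ssum m (a * Mseq m s + b) x = Ssum m (a * Mseq m s) x + of_nat b * Dir m (a * Mseq m s) x
           + rfun m s x ^ a * Ssum m b x"
  using b
proof (induct b)
  case (Suc b)
  have "Ssum m (a * Mseq m s + Suc b) x = Ssum m (a * Mseq m s + b) x + Dir m (a * Mseq m s + Suc b) x"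
    by (simp add: Ssum_Suc)
  also have "Dir m (a * Mseq m s + Suc b) x = Dir m (a * Mseq m s) x + rfun m s x ^ a * Dir m (Suc b) x"
    using Suc.prems a by (intro Dir_comb) auto
  finally show ?case using Suc by (simp add: Ssum_Suc algebra_simps)
qed simp

lemma norm_Dir_mult:
  assumes "a \<le> m s"
  shows "norm (Dir m (a * Mseq m s) x) \<le> a * norm (Dir m (Mseq m s) x)"
proof -
  have "norm (\<Sum>t<a. rfun m s x ^ t) \<le> (\<Sum>t<a. norm (rfun m s x ^ t))" by (rule norm_sum)
  also have "\<dots> = a" by (simp add: norm_power norm_rfun)
  finally have "norm (\<Sum>t<a. rfun m s x ^ t) \<le> a" .
  from mult_left_mono[OF this norm_ge_zero[of "Dir m (Mseq m s) x"]]
  show ?thesis unfolding Dir_mult[OF assms, of x] norm_mult by (simp add: mult.commute)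
qed

lemma Ssum_block:
  assumes "a \<le> m s"
  shows "norm (Ssum m (a * Mseq m s) x) \<le> a * norm (Ssum m (Mseq m s) x)
            + a * a * Mseq m s * norm (Dir m (Mseq m s) x)"
  using assms
proof (induct a)
  case (Suc a)
  let ?M = "Mseq m s" and ?D = "norm (Dir m (Mseq m s) x)" and ?S = "norm (Ssum m (Mseq m s) x)"
  have a: "a < m s" using Suc.prems by simp
  have "Ssum m (Suc a * ?M) x = Ssum m (a * ?M + ?M) x" by (simp add: add.commute)
  also have "\<dots> = Ssum m (a * ?M) x + of_nat ?M * Dir m (a * ?M) x + rfun m s x ^ a * Ssum m ?M x"
    using a by (intro Ssum_comb) auto
  finally have e: "Ssum m (Suc a * ?M) x = Ssum m (a * ?M) x + of_nat ?M * Dir m (a * ?M) x + rfun m s x ^ a * Ssum m ?M x" .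
  have "norm (Ssum m (Suc a * ?M) x) \<le> norm (Ssum m (a * ?M) x) + norm (of_nat ?M * Dir m (a * ?M) x) + norm (rfun m s x ^ a * Ssum m ?M x)"
    unfolding e by (rule order_trans[OF norm_triangle_ineq add_mono[OF norm_triangle_ineq order_refl]])
  also have "\<dots> = norm (Ssum m (a * ?M) x) + ?M * norm (Dir m (a * ?M) x) + ?S"
    by (simp only: norm_mult norm_power norm_rfun norm_of_nat power_one mult_1)
  also have "\<dots> \<le> (a * ?S + a * a * ?M * ?D) + ?M * (a * ?D) + ?S"
    using Suc a norm_Dir_mult[of a s x] by (intro add_mono mult_left_mono) auto
  also have "\<dots> \<le> Suc a * ?S + Suc a * Suc a * ?M * ?D"
    by (simp add: algebra_simps mult_nonneg_nonneg)
  finally show ?case .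
qed simp


lemma nlev_prop: assumes "1 \<le> n"
  shows "Mseq m (nlev m n) \<le> n \<and> n < Mseq m (Suc (nlev m n))"
proof -
  define t where "t = (LEAST t. n < Mseq m t)"
  have t1: "n < Mseq m t" unfolding t_def using Mgt[of n] by (rule LeastI)
  have "t \<noteq> 0"
  proof
    assume "t = 0" with t1 assms show False by simp
  qed
  then obtain s where s: "t = Suc s" by (cases t) auto
  have "\<not> n < Mseq m s" using not_less_Least[of s "\<lambda>t. n < Mseq m t"] s t_def by simp
  hence ex: "Mseq m s \<le> n \<and> n < Mseq m (Suc s)" using t1 s by simp
  have un: "s' = s" if "Mseq m s' \<le> n \<and> n < Mseq m (Suc s')" for s'
  proof (rule ccontr)
    assume "s' \<noteq> s"
    hence "Suc s' \<le> s \<or> Suc s \<le> s'" by auto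
    thus False using Mmono that ex by (meson leD le_trans)
  qed
  have "nlev m n = s" unfolding nlev_def using ex un by (rule the_equality)
  thus ?thesis using ex by simp
qed

lemma nlev_less: assumes "1 \<le> b" "b < Mseq m s" shows "nlev m b < s"
proof (rule ccontr)
  assume "\<not> nlev m b < s"
  hence "Mseq m s \<le> Mseq m (nlev m b)" by (intro Mmono) auto
  thus False using nlev_prop[OF assms(1)] assms(2) by linarith
qed

lemma nlev_mono: assumes "1 \<le> k" "k \<le> n" shows "nlev m k \<le> nlev m n"
proof (rule ccontr)
  assume "\<not> nlev m k \<le> nlev m n"
  hence "Mseq m (Suc (nlev m n)) \<le> Mseq m (nlev m k)" by (intro Mmono) auto
  thus False using nlev_prop[OF assms(1)] nlev_prop[of n] assms by auto
qed

lemma Ssum_bound: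
  assumes x: "x \<in> Gm m" and B: "\<And>k. real (m k) \<le> B"
  shows "norm (Ssum m n x) \<le> (3 * B + 2 * B * B) * (\<Sum>j\<le>nlev m n. norm (Ssum m (Mseq m j) x))"
proof (induct n rule: less_induct)
  case (less n)
  let ?C = "3 * B + 2 * B * B"
  have B0: "0 \<le> B" using B[of 0] by linarith
  hence C0: "0 \<le> ?C" by simp
  show ?case
  proof (cases "n = 0")
    case True thus ?thesis using C0 by (simp add: sum_nonneg)
  next
    case False
    define s where "s = nlev m n"
    let ?M = "Mseq m s" and ?D = "norm (Dir m (Mseq m s) x)" and ?S = "norm (Ssum m (Mseq m s) x)"
    have ns: "?M \<le> n" "n < Mseq m (Suc s)" using nlev_prop[of n] False unfolding s_def by auto
    define a where "a = n div ?M"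
    define b where "b = n mod ?M"
    have Mp: "?M > 0" by (rule Mpos)
    have nab: "n = a * ?M + b" unfolding a_def b_def by (rule div_mult_mod_eq[symmetric])
    have bM: "b < ?M" unfolding b_def using Mp by simp
    have am: "a < m s" unfolding a_def using ns(2) Mp by (simp add: Mseq_Suc div_less_iff_less_mult)
    have aB: "real a \<le> B" using am B[of s] by linarith
    have e: "Ssum m n x = Ssum m (a * ?M) x + of_nat b * Dir m (a * ?M) x + rfun m s x ^ a * Ssum m b x"
      unfolding nab using am bM by (intro Ssum_comb) auto
    have "norm (Ssum m n x) \<le> norm (Ssum m (a * ?M) x) + norm (of_nat b * Dir m (a * ?M) x) + norm (rfun m s x ^ a * Ssum m b x)"
      unfolding e by (rule order_trans[OF norm_triangle_ineq add_mono[OF norm_triangle_ineq order_refl]])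
    also have "\<dots> = norm (Ssum m (a * ?M) x) + b * norm (Dir m (a * ?M) x) + norm (Ssum m b x)"
      by (simp only: norm_mult norm_power norm_rfun norm_of_nat power_one mult_1)
    also have "\<dots> \<le> (a * ?S + a * a * ?M * ?D) + ?M * (a * ?D) + norm (Ssum m b x)"
      using Ssum_block[of a s x] norm_Dir_mult[of a s x] am bM
      by (intro add_mono mult_mono) auto
    also have "\<dots> = a * ?S + (a * a + a) * (?M * ?D) + norm (Ssum m b x)"
      by (simp add: algebra_simps)
    also have "\<dots> \<le> B * ?S + (B * B + B) * (2 * ?S) + norm (Ssum m b x)"
    proof -
      have "real a * real a \<le> B * B" by (rule mult_mono[OF aB aB]) (use B0 in auto)
      hence h: "real a * real a + real a \<le> B * B + B" using aB by linarith
      have "(real a * real a + real a) * (?M * ?D) \<le> (B * B + B) * (2 * ?S)"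
        by (rule mult_mono[OF h Ssum_M[OF x, of s]]) (use B0 in auto)
      thus ?thesis using mult_right_mono[OF aB, of ?S] by simp
    qed
    also have "\<dots> \<le> ?C * ?S + ?C * (\<Sum>j<s. norm (Ssum m (Mseq m j) x))"
    proof -
      have "norm (Ssum m b x) \<le> ?C * (\<Sum>j<s. norm (Ssum m (Mseq m j) x))"
      proof (cases "b = 0")
        case True thus ?thesis using C0 by (simp add: sum_nonneg)
      next
        case False
        have "b < n" using bM ns by linarith
        hence "norm (Ssum m b x) \<le> ?C * (\<Sum>j\<le>nlev m b. norm (Ssum m (Mseq m j) x))" by (rule less)
        also have "\<dots> \<le> ?C * (\<Sum>j<s. norm (Ssum m (Mseq m j) x))"
          using nlev_less[of b s] False bM C0
          by (intro mult_left_mono sum_mono2) auto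
        finally show ?thesis .
      qed
      thus ?thesis by (simp add: algebra_simps)
    qed
    also have "\<dots> = ?C * (\<Sum>j\<le>nlev m n. norm (Ssum m (Mseq m j) x))"
      by (simp add: s_def lessThan_Suc_atMost[symmetric] algebra_simps)
    finally show ?thesis .
  qed
qed


lemma abel:
  fixes w :: "nat \<Rightarrow> complex"
  shows "(\<Sum>k=1..Suc n. w k * Dir m k x) = w (Suc n) * Ssum m (Suc n) x + (\<Sum>k=1..n. (w k - w (Suc k)) * Ssum m k x)"
proof (induct n)
  case 0 thus ?case by (simp add: Ssum_def)
next
  case (Suc n)
  have D: "Dir m (Suc (Suc n)) x = Ssum m (Suc (Suc n)) x - Ssum m (Suc n) x" by (simp add: Ssum_Suc)
  have "(\<Sum>k=1..Suc (Suc n). w k * Dir m k x) = (\<Sum>k=1..Suc n. w k * Dir m k x) + w (Suc (Suc n)) * Dir m (Suc (Suc n)) x"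
    by simp
  also have "\<dots> = w (Suc (Suc n)) * Ssum m (Suc (Suc n)) x + (\<Sum>k=1..Suc n. (w k - w (Suc k)) * Ssum m k x)"
    unfolding Suc D by (simp add: algebra_simps)
  finally show ?case .
qed


end

lemma K_bound:
  fixes q :: "nat \<Rightarrow> real"
  assumes q_nonneg: "\<And>k. q k \<ge> 0" and q0: "q 0 > 0"
    and q_O: "(\<lambda>n. q (n - 1) / Qsum q n) \<in> O[sequentially](\<lambda>n. 1 / real n)"
  shows "\<exists>K\<ge>0. \<forall>n\<ge>1. real n * q (n - 1) / Qsum q n \<le> K"
proof -
  obtain c where c: "c > 0" "eventually (\<lambda>n. norm (q (n - 1) / Qsum q n) \<le> c * norm (1 / real n)) sequentially"
    using q_O by (elim landau_o.bigE)
  then obtain N where N: "\<And>n. n \<ge> N \<Longrightarrow> norm (q (n - 1) / Qsum q n) \<le> c * norm (1 / real n)"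
    by (auto simp: eventually_sequentially)
  define K where "K = c + (\<Sum>n<N. \<bar>real n * q (n - 1) / Qsum q n\<bar>)"
  have "K \<ge> 0" using c by (simp add: K_def sum_nonneg)
  moreover have "real n * q (n - 1) / Qsum q n \<le> K" if n: "n \<ge> 1" for n
  proof (cases "n < N")
    case True
    have "real n * q (n - 1) / Qsum q n \<le> \<bar>real n * q (n - 1) / Qsum q n\<bar>" by (rule abs_ge_self)
    also have "\<dots> \<le> (\<Sum>n<N. \<bar>real n * q (n - 1) / Qsum q n\<bar>)"
      using True by (intro member_le_sum) auto
    finally show ?thesis using c by (simp add: K_def)
  next
    case False
    have Q: "Qsum q n \<ge> 0" unfolding Qsum_def by (simp add: sum_nonneg q_nonneg)
    have "q (n - 1) / Qsum q n \<le> c / real n"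
      using N[of n] False n Q q_nonneg[of "n-1"] by simp
    hence "real n * (q (n - 1) / Qsum q n) \<le> real n * (c / real n)"
      by (intro mult_left_mono) auto
    also have "\<dots> = c" using n by simp
    finally have "real n * q (n - 1) / Qsum q n \<le> c" by simp
    moreover have "0 \<le> (\<Sum>n<N. \<bar>real n * q (n - 1) / Qsum q n\<bar>)" by (rule sum_nonneg) simp
    ultimately show ?thesis unfolding K_def by linarith
  qed
  ultimately show ?thesis by blast
qed


theorem mainTheorem4:
  fixes m :: "nat \<Rightarrow> nat" and q :: "nat \<Rightarrow> real"
  assumes m_ge2: "\<And>k. m k \<ge> 2"
    and m_bdd: "\<exists>B. \<forall>k. m k \<le> B"
    and q_mono: "mono q"
    and q_nonneg: "\<And>k. q k \<ge> 0"
    and q0: "q 0 > 0"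
    and q_O: "(\<lambda>n. q (n - 1) / Qsum q n) \<in> O[sequentially](\<lambda>n. 1 / real n)"
  shows "\<exists>c>0. \<forall>n\<ge>1. \<forall>x\<in>Gm m.
           cmod (Norlund m q n x)
             \<le> c / real n * (\<Sum>j\<le>nlev m n. real (Mseq m j) * cmod (Fejer m (Mseq m j) x))"
proof -
  obtain B0 where B0: "\<And>k. m k \<le> B0" using m_bdd by blast
  define B where "B = real B0"
  have B: "\<And>k. real (m k) \<le> B" using B0 by (simp add: B_def)
  have Bnn: "0 \<le> B" using B[of 0] by linarith
  define C where "C = 3 * B + 2 * B * B"
  have C0: "0 \<le> C" using Bnn by (simp add: C_def)
  obtain K where K0: "K \<ge> 0" and K: "\<And>n. n \<ge> 1 \<Longrightarrow> real n * q (n - 1) / Qsum q n \<le> K"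
    using K_bound[OF q_nonneg q0 q_O] by blast
  define c where "c = K * C + 1"
  have "c > 0" using mult_nonneg_nonneg[OF K0 C0] unfolding c_def by linarith
  moreover have "cmod (Norlund m q n x)
             \<le> c / real n * (\<Sum>j\<le>nlev m n. real (Mseq m j) * cmod (Fejer m (Mseq m j) x))"
    if n1: "n \<ge> 1" and x: "x \<in> Gm m" for n x
  proof -
    define T where "T = (\<Sum>j\<le>nlev m n. norm (Ssum m (Mseq m j) x))"
    have T0: "T \<ge> 0" unfolding T_def by (simp add: sum_nonneg)
    have FT: "(\<Sum>j\<le>nlev m n. real (Mseq m j) * cmod (Fejer m (Mseq m j) x)) = T"
      unfolding T_def
    proof (intro sum.cong refl)
      fix j
      have "Mseq m j > 0" using Mpos[of m, OF m_ge2] by blast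
      thus "real (Mseq m j) * cmod (Fejer m (Mseq m j) x) = norm (Ssum m (Mseq m j) x)"
        by (simp add: Fejer_def Ssum_def norm_mult norm_divide)
    qed
    have Sk: "norm (Ssum m k x) \<le> C * T" if "1 \<le> k" "k \<le> n" for k
    proof -
      have "norm (Ssum m k x) \<le> C * (\<Sum>j\<le>nlev m k. norm (Ssum m (Mseq m j) x))"
        unfolding C_def by (rule Ssum_bound[of m, OF m_ge2 x B])
      also have "\<dots> \<le> C * T" unfolding T_def
        using nlev_mono[of m, OF m_ge2 that] C0 by (intro mult_left_mono sum_mono2) auto
      finally show ?thesis .
    qed
    obtain n' where n': "n = Suc n'" using n1 by (cases n) auto
    define w where "w = (\<lambda>k. q (Suc n' - k))"
    have wmono: "w (Suc k) \<le> w k" for k unfolding w_def by (rule monoD[OF q_mono]) auto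
    have Qp: "Qsum q n > 0"
    proof -
      have "q 0 \<le> Qsum q n" unfolding Qsum_def using n1 q_nonneg by (intro member_le_sum) auto
      thus ?thesis using q0 by linarith
    qed
    have sumeq: "(\<Sum>k=1..n. of_real (q (n - k)) * Dir m k x) =
        (\<lambda>k. complex_of_real (w k)) (Suc n') * Ssum m (Suc n') x
        + (\<Sum>k=1..n'. ((\<lambda>k. complex_of_real (w k)) k - (\<lambda>k. complex_of_real (w k)) (Suc k)) * Ssum m k x)"
      unfolding n' w_def by (rule abel) (rule m_ge2)
    have "norm (\<Sum>k=1..n. of_real (q (n - k)) * Dir m k x)
        \<le> norm (complex_of_real (w (Suc n')) * Ssum m (Suc n') x)
          + norm (\<Sum>k=1..n'. (complex_of_real (w k) - complex_of_real (w (Suc k))) * Ssum m k x)"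
      unfolding sumeq by (rule norm_triangle_ineq)
    also have "\<dots> \<le> w (Suc n') * (C * T) + (\<Sum>k=1..n'. (w k - w (Suc k)) * (C * T))"
    proof (rule add_mono)
      show "norm (complex_of_real (w (Suc n')) * Ssum m (Suc n') x) \<le> w (Suc n') * (C * T)"
        using Sk[of "Suc n'"] n' q_nonneg unfolding w_def
        by (simp add: norm_mult mult_left_mono)
      have "norm (\<Sum>k=1..n'. (complex_of_real (w k) - complex_of_real (w (Suc k))) * Ssum m k x)
          \<le> (\<Sum>k=1..n'. norm ((complex_of_real (w k) - complex_of_real (w (Suc k))) * Ssum m k x))"
        by (rule norm_sum)
      also have "\<dots> \<le> (\<Sum>k=1..n'. (w k - w (Suc k)) * (C * T))"
      proof (rule sum_mono)
        fix k assume k: "k \<in> {1..n'}"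
        have "norm ((complex_of_real (w k) - complex_of_real (w (Suc k))) * Ssum m k x)
            = (w k - w (Suc k)) * norm (Ssum m k x)"
          using wmono[of k] by (simp add: norm_mult flip: of_real_diff)
        also have "\<dots> \<le> (w k - w (Suc k)) * (C * T)"
          using Sk[of k] k n' wmono[of k] by (intro mult_left_mono) auto
        finally show "norm ((complex_of_real (w k) - complex_of_real (w (Suc k))) * Ssum m k x)
            \<le> (w k - w (Suc k)) * (C * T)" .
      qed
      finally show "norm (\<Sum>k=1..n'. (complex_of_real (w k) - complex_of_real (w (Suc k))) * Ssum m k x)
          \<le> (\<Sum>k=1..n'. (w k - w (Suc k)) * (C * T))" .
    qed
    also have "\<dots> = (w (Suc n') + (\<Sum>k=1..n'. w k - w (Suc k))) * (C * T)"
      by (simp add: sum_distrib_right ring_distribs)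
    also have "\<dots> = q (n - 1) * (C * T)"
      unfolding telesc by (simp add: w_def n')
    finally have NS: "norm (\<Sum>k=1..n. of_real (q (n - k)) * Dir m k x) \<le> q (n - 1) * (C * T)" .
    have "cmod (Norlund m q n x) = norm (\<Sum>k=1..n. of_real (q (n - k)) * Dir m k x) / Qsum q n"
      using Qp by (simp add: Norlund_def norm_mult norm_divide)
    also have "\<dots> \<le> q (n - 1) * (C * T) / Qsum q n"
      using NS Qp by (intro divide_right_mono) auto
    also have "\<dots> = (real n * q (n - 1) / Qsum q n) * (C * T) / real n"
      using n1 by (simp add: field_simps)
    also have "\<dots> \<le> K * (C * T) / real n"
      using K[OF n1] C0 T0 by (intro divide_right_mono mult_right_mono) auto
    also have "\<dots> \<le> c * T / real n"
      using C0 T0 K0 by (intro divide_right_mono) (auto simp: c_def algebra_simps)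
    also have "\<dots> = c / real n * (\<Sum>j\<le>nlev m n. real (Mseq m j) * cmod (Fejer m (Mseq m j) x))"
      unfolding FT by simp
    finally show ?thesis .
  qed
  ultimately show ?thesis by blast
qed

end
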